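(* For every integer $k\ge2$, the infimum $\alpha_*=\inf_{x\in\Delta^{d-1}}F^k(x)$ is attained at some point of $\Delta^{d-1}$, and $1\le\alpha_*\le 12\cdot3^{k-1}-3$.
   Context: Fix $k\ge2$ and $d=4\cdot3^{k-1}$. $\Delta^{d-1}=\{x=(x_1,\dots,x_d)\in\mathbb{R}^d: x_i>0,\ \sum_i x_i=1\}$. For $j=1,2,3,4$, $I_j=\{(j-1)3^{k-1}+1,\dots,j\cdot3^{k-1}\}$ and $\Sigma_j(x)=\sum_{l\in I_j}x_l$. Let $\sigma(t)=(1-t)/t$ for $t\in(0,1)$. For $i\in\{1,\dots,d\}$ let $j(i)=1$ if $i\equiv0\pmod4$, $j(i)=4$ if $i\equiv1$, $j(i)=3$ if $i\equiv2$, $j(i)=2$ if $i\equiv3\pmod 4$, and set $f_i(x)=\sigma(\Sigma_{j(i)}(x))\,\sigma(x_i)$. Define $F^k(x)=\max_{1\le i\le d}f_i(x)$ on $\Delta^{d-1}$. *)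

theory Defs
  imports "HOL-Analysis.Analysis"
begin

text \<open>Points of R^d are represented as functions nat => real, coordinates indexed by 1..d;
  coordinates outside 1..d are required to be 0 so that the simplex is a faithful copy.\<close>

definition dim_d :: "nat \<Rightarrow> nat" where
  "dim_d k = 4 * 3 ^ (k - 1)"

definition open_simplex :: "nat \<Rightarrow> (nat \<Rightarrow> real) set" where
  "open_simplex d = {x. (\<forall>i\<in>{1..d}. x i > 0) \<and> (\<forall>i. i \<notin> {1..d} \<longrightarrow> x i = 0)
                        \<and> (\<Sum>i=1..d. x i) = 1}"

definition block :: "nat \<Rightarrow> nat \<Rightarrow> nat set" where
  "block k j = {(j - 1) * 3 ^ (k - 1) + 1 .. j * 3 ^ (k - 1)}"

definition blocksum :: "nat \<Rightarrow> nat \<Rightarrow> (nat \<Rightarrow> real) \<Rightarrow> real" where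
  "blocksum k j x = (\<Sum>l\<in>block k j. x l)"

definition sigma :: "real \<Rightarrow> real" where
  "sigma t = (1 - t) / t"

definition jidx :: "nat \<Rightarrow> nat" where
  "jidx i = (if i mod 4 = 0 then 1 else if i mod 4 = 1 then 4 else if i mod 4 = 2 then 3 else 2)"

definition fcomp :: "nat \<Rightarrow> nat \<Rightarrow> (nat \<Rightarrow> real) \<Rightarrow> real" where
  "fcomp k i x = sigma (blocksum k (jidx i) x) * sigma (x i)"

definition Fk :: "nat \<Rightarrow> (nat \<Rightarrow> real) \<Rightarrow> real" where
  "Fk k x = Max ((\<lambda>i. fcomp k i x) ` {1..dim_d k})"

end

theory Submission
  imports Defs
begin
lemma compact_PiE_UNIV:
  assumes "\<And>i. compact (S i)"
  shows "compact (PiE UNIV (S::nat \<Rightarrow> real set))"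
  using assms compactin_PiE[of "\<lambda>i. euclidean" UNIV S] by (simp add: euclidean_product_topology)

lemma cont_coord: "continuous_on S (\<lambda>x::nat\<Rightarrow>real. x l)"
  by (rule continuous_on_subset[OF continuous_on_product_coordinates]) simp

lemma cont_Max:
  assumes "finite I" "I \<noteq> {}" "\<And>i. i\<in>I \<Longrightarrow> continuous_on S (f i)"
  shows "continuous_on S (\<lambda>x. Max ((\<lambda>i. f i x) ` I) :: real)"
  using assms
proof (induction I rule: finite_ne_induct)
  case (singleton a) then show ?case by simp
next
  case (insert a B)
  have "continuous_on S (\<lambda>x. max (f a x) (Max ((\<lambda>i. f i x) ` B)))"
    using insert by (intro continuous_on_max) auto
  then show ?case using insert by (simp add: Max_insert)
qed

lemma sig_ge1: "0 < a \<Longrightarrow> 0 < b \<Longrightarrow> a + b \<le> 1 \<Longrightarrow> 1 \<le> sigma a * sigma b"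
  unfolding sigma_def by (simp add: field_simps)

lemma algA:
  fixes a b s C :: real
  assumes "0<a" "0<b" "0<s" "a+s \<le> 1" "b+s \<le> 1" "sigma a * sigma b \<le> C" "C \<ge> 1"
  shows "(1+C)*(1-s) \<ge> 1"
proof -
  have "(1-a)*(1-b) \<le> C*(a*b)" using assms(1,2,6) unfolding sigma_def by (simp add: field_simps)
  moreover have "s * s \<le> (1-a)*(1-b)" using assms by (intro mult_mono) auto
  moreover have "a*b \<le> (1-s)*(1-s)" using assms by (intro mult_mono) auto
  ultimately have h: "s * s \<le> C*((1-s)*(1-s))" using assms(7)
    by (smt (verit) mult_left_mono)
  have "s \<le> C*(1-s)"
  proof (rule ccontr)
    assume "\<not> ?thesis"
    then have "C*(1-s) < s" by simp
    moreover have "0 \<le> C*(1-s)" using assms by auto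
    ultimately have "(C*(1-s))*(C*(1-s)) < s * s" by (simp add: mult_strict_mono')
    moreover have "C*((1-s)*(1-s)) \<le> C*C*((1-s)*(1-s))" using assms by (simp add: mult_right_mono)
    ultimately show False using h by (simp add: algebra_simps)
  qed
  then show ?thesis by (simp add: algebra_simps)
qed

lemma algB:
  fixes s y C :: real
  assumes "0<s" "s \<le> 1" "0<y" "sigma s * sigma y \<le> C" "(1+C)*(1-s) \<ge> 1" "C \<ge> 1"
  shows "y \<ge> 1/(1+C+C^2)"
proof (cases "y \<le> 1")
  case False
  have "0 \<le> C^2" by simp
  then have "1 \<le> 1+C+C^2" using assms by linarith
  then have "1/(1+C+C^2) \<le> 1" by simp
  then show ?thesis using False by simp
next
  case True
  have h: "(1-s)*(1-y) \<le> C*(s*y)" using assms(1,3,4) unfolding sigma_def by (simp add: field_simps)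
  have h2: "C*(s*y) \<le> C*y" using assms True by (simp add: mult_left_mono mult_right_le_one_le)
  have h3: "0 \<le> 1-y" using True by simp
  have "(1-y)*1 \<le> (1-y)*((1+C)*(1-s))" by (rule mult_left_mono[OF assms(5) h3])
  also have "\<dots> = (1+C)*((1-s)*(1-y))" by (simp add: algebra_simps)
  also have "\<dots> \<le> (1+C)*(C*y)" using order_trans[OF h h2] assms(6) by (intro mult_left_mono) auto
  finally have "1 - y \<le> (1+C)*(C*y)" by simp
  then have "1 \<le> y*(1+C+C^2)" by (simp add: algebra_simps power2_eq_square)
  moreover have "0 < 1+C+C^2" using assms(6) by (simp add: add_pos_nonneg)
  ultimately show ?thesis by (simp add: divide_le_eq)
qed

lemma dim_eq: "dim_d k = 4 * 3^(k-1)" by (simp add: dim_d_def)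

lemma m_ge3: "k \<ge> 2 \<Longrightarrow> (3::nat) \<le> 3^(k-1)"
proof -
  assume "k \<ge> 2"
  then have "(3::nat)^1 \<le> 3^(k-1)" by (intro power_increasing) auto
  then show ?thesis by simp
qed

lemma block_sub:
  assumes "j \<in> {1..4}" shows "block k j \<subseteq> {1..dim_d k}"
proof -
  have "j * 3^(k-1) \<le> 4 * 3^(k-1)" using assms by simp
  then show ?thesis unfolding block_def dim_d_def by auto
qed

lemma block_disj:
  assumes "j \<ge> 1" "j' \<ge> 1" "j \<noteq> j'" shows "block k j \<inter> block k j' = {}"
proof -
  { fix a b :: nat assume "1 \<le> a" "a < b"
    then have h: "a * 3^(k-1) \<le> (b-1) * 3^(k-1)" by (intro mult_right_mono) auto
    { fix l assume "l \<in> block k a" "l \<in> block k b"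
      then have "l \<le> a * 3^(k-1)" "(b-1) * 3^(k-1) + 1 \<le> l" unfolding block_def by auto
      with h have False by linarith }
    then have "block k a \<inter> block k b = {}" by blast }
  note * = this
  show ?thesis
  proof (cases "j < j'")
    case True then show ?thesis using * assms by auto
  next
    case False then have "j' < j" using assms by auto
    then show ?thesis using *[of j' j] assms by auto
  qed
qed

lemma block_card: "j \<ge> 1 \<Longrightarrow> card (block k j) = 3^(k-1)"
proof -
  assume j: "j \<ge> 1"
  define m :: nat where "m = 3^(k-1)"
  obtain i where i: "j = Suc i" using j by (cases j) auto
  have "block k j = {i*m+1 .. i*m + m}" unfolding block_def m_def[symmetric] i by simp
  then show ?thesis unfolding m_def[symmetric] by simp
qed

lemma block_ne: "j \<ge> 1 \<Longrightarrow> block k j \<noteq> {}"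
  using block_card[of j k] by (metis card.empty power_not_zero zero_neq_numeral)

lemma jidx_range: "jidx i \<in> {1..4}" unfolding jidx_def by auto

lemma witness:
  assumes "k \<ge> 2" "j \<in> {1..4}"
  shows "\<exists>i'\<in>{1..dim_d k}. i' \<notin> block k j \<and> jidx i' \<noteq> j"
proof -
  define m where "m = (3::nat)^(k-1)"
  have m3: "m \<ge> 3" using m_ge3[OF assms(1)] by (simp add: m_def)
  have d: "dim_d k = 4*m" by (simp add: dim_d_def m_def)
  have bl: "block k j = {(j-1)*m+1 .. j*m}" by (simp add: block_def m_def)
  consider "j = 1" | "j = 2" | "j = 3" | "j = 4" using assms(2) by force
  then show ?thesis
  proof cases
    case 1
    have e: "4*m-1 = 4*(m-1)+3" using m3 by simp
    have "(4*m-1) mod 4 = 3" unfolding e by simp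
    then have "jidx (4*m-1) = 2" by (simp add: jidx_def)
    moreover have "4*m-1 \<in> {1..dim_d k}" using m3 d by simp
    moreover have "4*m-1 \<notin> block k j" using m3 bl 1 by auto
    ultimately show ?thesis using 1 by fastforce
  next
    case 2
    have "(1::nat) \<notin> block k j" using m3 bl 2 by simp
    moreover have "(1::nat) \<in> {1..dim_d k}" using m3 d by simp
    moreover have "jidx 1 = 4" by (simp add: jidx_def)
    ultimately show ?thesis using 2 by fastforce
  next
    case 3
    have "(1::nat) \<notin> block k j" using m3 bl 3 by simp
    moreover have "(1::nat) \<in> {1..dim_d k}" using m3 d by simp
    moreover have "jidx 1 = 4" by (simp add: jidx_def)
    ultimately show ?thesis using 3 by fastforce
  next
    case 4
    have "(2::nat) \<notin> block k j" using m3 bl 4 by simp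
    moreover have "(2::nat) \<in> {1..dim_d k}" using m3 d by simp
    moreover have "jidx 2 = 3" by (simp add: jidx_def)
    ultimately show ?thesis using 4 by fastforce
  qed
qed
lemma simp_nonneg:
  assumes x: "x \<in> open_simplex d" shows "x i \<ge> 0"
proof (cases "i \<in> {1..d}")
  case True
  then have "x i > 0" using x unfolding open_simplex_def by blast
  then show ?thesis by simp
next
  case False
  then have "x i = 0" using x unfolding open_simplex_def by blast
  then show ?thesis by simp
qed

lemma sum2:
  assumes "x \<in> open_simplex d" "A \<subseteq> {1..d}" "B \<subseteq> {1..d}" "A \<inter> B = {}"
  shows "sum x A + sum x B \<le> 1"
proof -
  have fA: "finite A" "finite B" using assms(2,3) finite_subset by blast+
  have "sum x A + sum x B = sum x (A \<union> B)" using fA assms(4) by (simp add: sum.union_disjoint)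
  also have "\<dots> \<le> sum x {1..d}" using assms simp_nonneg by (intro sum_mono2) auto
  also have "\<dots> = 1" using assms(1) unfolding open_simplex_def by simp
  finally show ?thesis .
qed



lemma blocksum_pos:
  assumes "x \<in> open_simplex (dim_d k)" "j \<in> {1..4}" shows "blocksum k j x > 0"
proof -
  have "block k j \<subseteq> {1..dim_d k}" using block_sub assms by blast
  moreover have "block k j \<noteq> {}" using block_ne assms by auto
  moreover have "finite (block k j)" by (simp add: block_def)
  ultimately show ?thesis using assms(1) unfolding blocksum_def open_simplex_def
    by (intro sum_pos) auto
qed


lemma lower_bound:
  assumes "k \<ge> 2" "x \<in> open_simplex (dim_d k)" "C \<ge> 1" "\<And>i. i\<in>{1..dim_d k} \<Longrightarrow> fcomp k i x \<le> C"
    "i \<in> {1..dim_d k}"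
  shows "x i \<ge> 1/(1+C+C^2)"
proof -
  define j where "j = jidx i"
  have j: "j \<in> {1..4}" using jidx_range j_def by simp
  obtain i' where i': "i' \<in> {1..dim_d k}" "i' \<notin> block k j" "jidx i' \<noteq> j"
    using witness[OF assms(1) j] by blast
  have j': "jidx i' \<in> {1..4}" by (rule jidx_range)
  have pos: "\<And>l. l \<in> {1..dim_d k} \<Longrightarrow> x l > 0" using assms(2) unfolding open_simplex_def by auto
  have "blocksum k (jidx i') x + blocksum k j x \<le> 1"
    using sum2[OF assms(2) block_sub[OF j'] block_sub[OF j]] block_disj[of "jidx i'" j k] j j' i'
    unfolding blocksum_def by auto
  moreover have "x i' + blocksum k j x \<le> 1"
    using sum2[OF assms(2) _ block_sub[OF j], of "{i'}"] i' unfolding blocksum_def by auto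
  ultimately have "(1+C)*(1 - blocksum k j x) \<ge> 1"
    using algA[of "blocksum k (jidx i') x" "x i'" "blocksum k j x" C] assms(3) assms(4)[of i'] i'
      blocksum_pos[OF assms(2) j] blocksum_pos[OF assms(2) j'] pos[of i']
    unfolding fcomp_def by auto
  moreover have "blocksum k j x \<le> 1"
    using sum2[OF assms(2) block_sub[OF j], of "{}"] unfolding blocksum_def by auto
  ultimately show ?thesis
    using algB[of "blocksum k j x" "x i" C] assms(3,4,5) blocksum_pos[OF assms(2) j] pos[OF assms(5)]
    unfolding fcomp_def j_def by auto
qed



lemma Fk_ge1:
  assumes "k \<ge> 2" "x \<in> open_simplex (dim_d k)" shows "1 \<le> Fk k x"
proof -
  have m3: "3 \<le> (3::nat)^(k-1)" using m_ge3 assms by blast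
  have d1: "1 \<in> {1..dim_d k}" by (simp add: dim_d_def)
  have nb: "1 \<notin> block k 4" unfolding block_def by auto
  have "blocksum k 4 x + x 1 \<le> 1"
    using sum2[OF assms(2) block_sub[of 4 k], of "{1}"] nb d1 unfolding blocksum_def by auto
  moreover have "blocksum k 4 x > 0" using blocksum_pos assms by auto
  moreover have "x 1 > 0" using assms(2) d1 unfolding open_simplex_def by auto
  ultimately have "1 \<le> fcomp k 1 x" unfolding fcomp_def jidx_def by (simp add: sig_ge1)
  also have "\<dots> \<le> Fk k x" unfolding Fk_def using d1 by (intro Max_ge) auto
  finally show ?thesis .
qed

lemma Fk_u:
  assumes "k \<ge> 2"
  defines "u \<equiv> (\<lambda>i. if i \<in> {1..dim_d k} then 1 / real (dim_d k) else 0)"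
  shows "Fk k u = 12 * 3^(k-1) - 3"
proof -
  define m where "m = (3::nat)^(k-1)"
  have d: "dim_d k = 4*m" by (simp add: dim_d_def m_def)
  have mpos: "m > 0" by (simp add: m_def)
  have c: "fcomp k i u = 12 * 3^(k-1) - 3" if i: "i \<in> {1..dim_d k}" for i
  proof -
    have j: "jidx i \<in> {1..4}" by (rule jidx_range)
    have "blocksum k (jidx i) u = (\<Sum>l\<in>block k (jidx i). 1 / real (dim_d k))"
      unfolding blocksum_def u_def using block_sub[OF j, of k] by (intro sum.cong) auto
    also have "\<dots> = real m / real (4*m)" using block_card[of "jidx i" k] j d by (simp add: m_def)
    also have "\<dots> = 1/4" using mpos by simp
    finally have b: "blocksum k (jidx i) u = 1/4" .
    have ui: "u i = 1 / real (4*m)" using i d by (simp add: u_def)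
    have "sigma (1/4) = 3" by (simp add: sigma_def)
    moreover have "sigma (1 / real (4*m)) = 4 * real m - 1" using mpos by (simp add: sigma_def field_simps)
    ultimately have "fcomp k i u = 3 * (4 * real m - 1)" unfolding fcomp_def b ui by simp
    then show ?thesis by (simp add: m_def algebra_simps)
  qed
  have ne: "{1..dim_d k} \<noteq> {}" by (simp add: dim_d_def)
  have "(\<lambda>i. fcomp k i u) ` {1..dim_d k} = {12 * 3^(k-1) - 3}" using c ne by auto
  then show ?thesis unfolding Fk_def by simp
qed

theorem mainTheorem5:
  fixes k :: nat
  assumes "k \<ge> 2"
  shows "\<exists>x\<in>open_simplex (dim_d k).
           Fk k x = (INF y\<in>open_simplex (dim_d k). Fk k y)
         \<and> 1 \<le> (INF y\<in>open_simplex (dim_d k). Fk k y)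
         \<and> (INF y\<in>open_simplex (dim_d k). Fk k y) \<le> 12 * 3 ^ (k - 1) - 3"
proof -
  define d where "d = dim_d k"
  define C :: real where "C = 12 * 3^(k-1) - 3"
  define \<delta> where "\<delta> = 1/(1+C+C^2)"
  define u where "u = (\<lambda>i. if i \<in> {1..d} then 1 / real d else 0)"
  define T where "T = (\<lambda>i. if i \<in> {1..d} then {\<delta>..1} else {0::real})"
  define S where "S = PiE UNIV T \<inter> {x. (\<Sum>i=1..d. x i) = 1}"
  define P where "P = open_simplex d"
  have m3: "3 \<le> (3::nat)^(k-1)" using m_ge3 assms by blast
  have dge: "d \<ge> 12" using m3 by (simp add: d_def dim_d_def)
  have "(3::real) \<le> 3^(k-1)" using m3 by (metis of_nat_le_iff of_nat_numeral of_nat_power)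
  then have C1: "C \<ge> 1" by (simp add: C_def)
  have dpos: "\<delta> > 0" using C1 by (simp add: \<delta>_def add_pos_nonneg)
  have FC: "Fk k u = C" unfolding u_def d_def C_def using Fk_u[OF assms] by simp
  have SP: "S \<subseteq> P"
  proof
    fix x assume "x \<in> S"
    then have T: "\<And>i. x i \<in> T i" and sm: "(\<Sum>i=1..d. x i) = 1" by (auto simp: S_def)
    have pos: "\<forall>i\<in>{1..d}. x i > 0"
    proof
      fix i assume i: "i \<in> {1..d}"
      then have "x i \<ge> \<delta>" using T[of i] by (simp add: T_def)
      then show "x i > 0" using dpos by linarith
    qed
    have zero: "\<forall>i. i \<notin> {1..d} \<longrightarrow> x i = 0"
    proof (intro allI impI)
      fix i assume i: "i \<notin> {1..d}"
      then show "x i = 0" using T[of i] unfolding T_def by (simp only: if_False) simp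
    qed
    show "x \<in> P" unfolding P_def open_simplex_def using pos zero sm by blast
  qed
  have "compact S" unfolding S_def
  proof (rule compact_Int_closed)
    show "compact (PiE UNIV T)" by (rule compact_PiE_UNIV) (simp add: T_def)
    show "closed {x::nat\<Rightarrow>real. (\<Sum>i=1..d. x i) = 1}"
      by (rule closed_Collect_eq) (auto intro!: continuous_on_sum cont_coord)
  qed
  have dd: "real d \<ge> 12" using dge by simp
  have "\<delta> \<le> 1 / real d"
  proof -
    have rd: "real d = 4 * 3^(k-1)" by (simp add: d_def dim_d_def)
    have "C * 1 \<le> C * C" using C1 by (intro mult_left_mono) auto
    then have "C \<le> C^2" by (simp add: power2_eq_square)
    then have "real d \<le> 1 + C + C^2" using rd \<open>(3::real) \<le> 3^(k-1)\<close> unfolding C_def by linarith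
    then show ?thesis unfolding \<delta>_def using dd by (simp add: frac_le)
  qed
  moreover have "1 / real d \<le> 1" using dd by simp
  moreover have "(\<Sum>i=1..d. u i) = 1" using dd by (simp add: u_def)
  ultimately have uS: "u \<in> S" unfolding S_def T_def u_def by auto
  have cont: "continuous_on S (Fk k)"
  proof -
    have "continuous_on S (\<lambda>x. fcomp k i x)" if i: "i \<in> {1..d}" for i
    proof -
      have j: "jidx i \<in> {1..4}" by (rule jidx_range)
      have b0: "\<forall>x\<in>S. blocksum k (jidx i) x \<noteq> 0"
        using blocksum_pos[OF _ j] SP unfolding P_def d_def by fastforce
      have x0: "\<forall>x\<in>S. x i \<noteq> 0"
        using SP i unfolding P_def open_simplex_def by fastforce
      have cb: "continuous_on S (\<lambda>x. blocksum k (jidx i) x)"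
        unfolding blocksum_def by (intro continuous_on_sum cont_coord)
      show ?thesis unfolding fcomp_def sigma_def
        using b0 x0 cb cont_coord[of S i]
        by (intro continuous_on_mult continuous_on_divide continuous_on_diff continuous_on_const) auto
    qed
    then show ?thesis unfolding Fk_def d_def[symmetric] using dge by (intro cont_Max) auto
  qed
  obtain x0 where x0: "x0 \<in> S" "\<And>y. y \<in> S \<Longrightarrow> Fk k x0 \<le> Fk k y"
    using continuous_attains_inf[OF \<open>compact S\<close> _ cont] uS by blast
  have low: "Fk k x0 \<le> Fk k y" if y: "y \<in> P" for y
  proof (cases "Fk k y \<le> C")
    case True
    have fc: "\<And>i. i \<in> {1..dim_d k} \<Longrightarrow> fcomp k i y \<le> C"
      using True unfolding Fk_def by (meson Max_ge finite_atLeastAtMost finite_imageI image_eqI order_trans)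
    have yP: "y \<in> open_simplex (dim_d k)" using y by (simp add: P_def d_def)
    have "y i \<in> T i" for i
    proof (cases "i \<in> {1..d}")
      case True
      have "y i \<ge> \<delta>" using lower_bound[OF assms yP C1 fc] True by (simp add: \<delta>_def d_def)
      moreover have "y i \<le> 1" using sum2[OF yP _ _ , of "{i}" "{}"] True by (simp add: d_def)
      ultimately show ?thesis using True by (simp add: T_def)
    next
      case False then show ?thesis using y unfolding P_def open_simplex_def T_def by auto
    qed
    moreover have "(\<Sum>i=1..d. y i) = 1" using y unfolding P_def open_simplex_def by auto
    ultimately have "y \<in> S" unfolding S_def by auto
    then show ?thesis using x0 by blast
  next
    case False
    then show ?thesis using x0(2)[OF uS] FC by simp
  qed
  have x0P: "x0 \<in> P" using x0 SP by blast
  have inf: "(INF y\<in>P. Fk k y) = Fk k x0"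
  proof (rule antisym)
    show "(INF y\<in>P. Fk k y) \<le> Fk k x0"
      using x0P low by (intro cINF_lower) (auto intro!: bdd_belowI2[where m="Fk k x0"])
    show "Fk k x0 \<le> (INF y\<in>P. Fk k y)"
      using x0P low by (intro cINF_greatest) auto
  qed
  have "1 \<le> Fk k x0" using Fk_ge1[OF assms] x0P by (simp add: P_def d_def)
  moreover have "Fk k x0 \<le> C" using x0(2)[OF uS] FC by simp
  ultimately show ?thesis using x0P inf unfolding P_def d_def C_def by auto
qed


end
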